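(* Let $M\ge1$ be an integer and for $j=0,\ldots,M-1$ let $f_j:\mathbb{Z}_M\to\mathbb{Z}_2$ be the Grover function $f_j(x)=\delta_{xj}$. Then the standard oracle operators $U_{f_0},\ldots,U_{f_{M-1}}$ are unambiguously distinguishable; indeed the matrix $\Gamma$ with $\Gamma_{j'j}=\#\{x\in\mathbb{Z}_M: f_{j'}(x)=f_j(x)\}$ satisfies $\det\Gamma=2^{M-1}[(M-1)^2+1]>0$.
   Context: Let $\mathcal{H}_M,\mathcal{H}_2$ be Hilbert spaces with orthonormal computational bases $\{|x\rangle\}_{x\in\mathbb{Z}_M}$, $\{|y\rangle\}_{y\in\mathbb{Z}_2}$. For $f:\mathbb{Z}_M\to\mathbb{Z}_2$ the standard oracle operator is the unitary $U_f$ on $\mathcal{H}_M\otimes\mathcal{H}_2$ with $U_f|x\rangle\otimes|y\rangle=|x\rangle\otimes|y\oplus f(x)\rangle$, $\oplus$ being addition mod 2. A finite list of unitary operators $W_1,\ldots,W_K$ on a finite-dimensional Hilbert space $\mathcal{H}$ is called unambiguously distinguishable if there exist a finite-dimensional ancilla space $\mathcal{H}_A$ and a unit vector $|\psi\rangle\in\mathcal{H}\otimes\mathcal{H}_A$ such that the vectors $(W_j\otimes\mathbb{1}_A)|\psi\rangle$ are linearly independent. *)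

theory Defs
  imports "Jordan_Normal_Form.Determinant"
begin

text \<open>The computational basis vector |x> (x) |y> of
  H_M (x) H_2 is the basis vector with index 2*x + y; a basis vector |i> (x) |a> of
  H (x) H_A (dim H = n, dim H_A = d) has index i*d + a.\<close>

definition conj_transpose :: "complex mat \<Rightarrow> complex mat" where
  "conj_transpose W = mat (dim_col W) (dim_row W) (\<lambda>(i,j). cnj (W $$ (j,i)))"

definition unitary_op :: "nat \<Rightarrow> complex mat \<Rightarrow> bool" where
  "unitary_op n W \<longleftrightarrow> W \<in> carrier_mat n n \<and> W * conj_transpose W = 1\<^sub>m n
      \<and> conj_transpose W * W = 1\<^sub>m n"

definition tensor_id :: "complex mat \<Rightarrow> nat \<Rightarrow> complex mat" where
  "tensor_id W d = mat (dim_row W * d) (dim_col W * d)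
     (\<lambda>(i,j). if i mod d = j mod d then W $$ (i div d, j div d) else 0)"

definition unit_vector :: "nat \<Rightarrow> complex vec \<Rightarrow> bool" where
  "unit_vector N v \<longleftrightarrow> v \<in> carrier_vec N \<and> (\<Sum>i<N. (cmod (v $ i))\<^sup>2) = 1"

definition lin_indep_list :: "nat \<Rightarrow> complex vec list \<Rightarrow> bool" where
  "lin_indep_list N vs \<longleftrightarrow>
     (\<forall>c :: nat \<Rightarrow> complex.
        (\<forall>i<N. (\<Sum>j<length vs. c j * (vs ! j) $ i) = 0) \<longrightarrow> (\<forall>j<length vs. c j = 0))"

definition unamb_distinguishable :: "nat \<Rightarrow> complex mat list \<Rightarrow> bool" where
  "unamb_distinguishable n Ws \<longleftrightarrow>
     (\<exists>d::nat. d > 0 \<and> (\<exists>\<psi>. unit_vector (n * d) \<psi> \<and>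
        lin_indep_list (n * d) (map (\<lambda>W. tensor_id W d *\<^sub>v \<psi>) Ws)))"

text \<open>Standard oracle U_f on H_M (x) H_2 for f : Z_M \<rightarrow> Z_2 (values 0/1 as nat):
  U_f |x>|y> = |x>|y xor f x>.\<close>
definition oracle_op :: "nat \<Rightarrow> (nat \<Rightarrow> nat) \<Rightarrow> complex mat" where
  "oracle_op M f = mat (2 * M) (2 * M)
     (\<lambda>(i,j). if i div 2 = j div 2 \<and> i mod 2 = (j mod 2 + f (j div 2)) mod 2 then 1 else 0)"

definition grover :: "nat \<Rightarrow> nat \<Rightarrow> nat" where
  "grover j x = (if x = j then 1 else 0)"

definition gram_count :: "nat \<Rightarrow> int mat" where
  "gram_count M = mat M M (\<lambda>(j',j). int (card {x. x < M \<and> grover j' x = grover j x}))"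

end

theory Submission
  imports Defs
begin


definition sig :: "(nat \<Rightarrow> nat) \<Rightarrow> nat \<Rightarrow> nat" where
  "sig f i = 2 * (i div 2) + (i mod 2 + f (i div 2)) mod 2"

lemma sig_lt: assumes "i < 2 * M" shows "sig f i < 2 * M"
proof -
  have "i div 2 < M" using assms by simp
  moreover have "(i mod 2 + f (i div 2)) mod 2 < 2" by simp
  ultimately show ?thesis unfolding sig_def by linarith
qed

lemma sig_div: "sig f i div 2 = i div 2" unfolding sig_def by simp
lemma sig_mod: "sig f i mod 2 = (i mod 2 + f (i div 2)) mod 2" unfolding sig_def by simp

lemma sig_sig: "f x < 2 \<Longrightarrow> x = i div 2 \<Longrightarrow> sig f (sig f i) = i"
proof -
  have "sig f (sig f i) = 2 * (i div 2) + ((i mod 2 + f (i div 2)) mod 2 + f (i div 2)) mod 2"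
    unfolding sig_def[of f "sig f i"] sig_div sig_mod ..
  also have "((i mod 2 + f (i div 2)) mod 2 + f (i div 2)) mod 2 = i mod 2"
  proof -
    have e: "(i + y + y) mod 2 = i mod 2" for y :: nat by presburger
    show ?thesis by (simp add: mod_add_left_eq e)
  qed
  finally have "sig f (sig f i) = 2 * (i div 2) + i mod 2" .
  then show ?thesis by (simp only: mult_div_mod_eq)
qed

lemma oracle_entry:
  assumes "i < 2 * M" "j < 2 * M"
  shows "oracle_op M f $$ (i, j) = (if i = sig f j then 1 else 0)"
proof -
  have "(i div 2 = j div 2 \<and> i mod 2 = (j mod 2 + f (j div 2)) mod 2) \<longleftrightarrow> i = sig f j"
  proof
    assume h: "i div 2 = j div 2 \<and> i mod 2 = (j mod 2 + f (j div 2)) mod 2"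
    have "i = 2 * (i div 2) + i mod 2" by (simp only: mult_div_mod_eq)
    also have "\<dots> = sig f j" unfolding sig_def using h by (simp only:)
    finally show "i = sig f j" .
  next
    assume "i = sig f j"
    then show "i div 2 = j div 2 \<and> i mod 2 = (j mod 2 + f (j div 2)) mod 2"
      using sig_div[of f j] sig_mod[of f j] by (simp only:)
  qed
  then show ?thesis using assms unfolding oracle_op_def by auto
qed


lemma sig_swap: assumes "\<And>x. f x < 2" shows "i = sig f j \<longleftrightarrow> j = sig f i"
  using sig_sig[of f, OF assms] by metis

lemma oracle_ct: assumes "\<And>x. f x < 2"
  shows "conj_transpose (oracle_op M f) = oracle_op M f"
proof (rule eq_matI)
  fix i j assume ij: "i < dim_row (oracle_op M f)" "j < dim_col (oracle_op M f)"
  then have ij': "i < 2 * M" "j < 2 * M" by (auto simp: oracle_op_def)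
  have "conj_transpose (oracle_op M f) $$ (i, j) = cnj (oracle_op M f $$ (j, i))"
    using ij' by (simp add: conj_transpose_def oracle_op_def)
  also have "\<dots> = (if j = sig f i then 1 else 0)" using ij' by (simp add: oracle_entry)
  also have "\<dots> = (if i = sig f j then 1 else 0)" using sig_swap[of f j i, OF assms] by simp
  also have "\<dots> = oracle_op M f $$ (i, j)" using ij' by (simp add: oracle_entry)
  finally show "conj_transpose (oracle_op M f) $$ (i, j) = oracle_op M f $$ (i, j)" .
qed (auto simp: conj_transpose_def oracle_op_def)

lemma oracle_sq: assumes "\<And>x. f x < 2"
  shows "oracle_op M f * oracle_op M f = 1\<^sub>m (2 * M)"
proof (rule eq_matI)
  fix i j assume ij: "i < dim_row (1\<^sub>m (2 * M))" "j < dim_col (1\<^sub>m (2 * M) :: complex mat)"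
  have d: "dim_row (oracle_op M f) = 2 * M" "dim_col (oracle_op M f) = 2 * M"
    by (auto simp: oracle_op_def)
  have "(oracle_op M f * oracle_op M f) $$ (i, j) =
     (\<Sum>k\<in>{0..<2*M}. (if i = sig f k then 1 else 0) * (if k = sig f j then 1 else 0))"
    using ij d by (auto simp: scalar_prod_def oracle_entry intro!: sum.cong)
  also have "\<dots> = (\<Sum>k\<in>{0..<2*M}. if k = sig f j then (if i = sig f (sig f j) then 1 else 0) else 0)"
    by (rule sum.cong) auto
  also have "\<dots> = (if i = j then 1 else 0)"
    using sig_lt[of j M f] ij sig_sig[of f "j div 2" j] assms by (simp)
  finally show "(oracle_op M f * oracle_op M f) $$ (i, j) = 1\<^sub>m (2 * M) $$ (i, j)"
    using ij by simp
qed (auto simp: oracle_op_def)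

lemma oracle_unitary: assumes "\<And>x. f x < 2"
  shows "unitary_op (2 * M) (oracle_op M f)"
  unfolding unitary_op_def oracle_ct[OF assms] oracle_sq[OF assms]
  by (auto simp: oracle_op_def)

lemma grover_lt: "grover j x < 2" by (simp add: grover_def)

lemma tensor_id_1: "tensor_id W 1 = W"
  by (rule eq_matI) (auto simp: tensor_id_def)

lemma tensor_id_Suc0: "tensor_id W (Suc 0) = W" using tensor_id_1 by simp

definition psi :: "nat \<Rightarrow> complex vec" where
  "psi M = vec (2 * M) (\<lambda>i. if even i then complex_of_real (1 / sqrt M) else 0)"

lemma sum_even: "(\<Sum>i<2 * n. if even i then a else 0) = of_nat n * (a :: real)"
  by (induction n) (auto simp: algebra_simps)

lemma psi_unit: assumes "M \<ge> 1" shows "unit_vector (2 * M * 1) (psi M)"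
proof -
  have "(\<Sum>i<2 * M. (cmod (psi M $ i))\<^sup>2) = (\<Sum>i<2 * M. if even i then 1 / real M else 0)"
    by (rule sum.cong) (auto simp: psi_def power_divide norm_divide)
  also have "\<dots> = 1" using assms by (simp add: sum_even)
  finally show ?thesis unfolding unit_vector_def by (simp add: psi_def)
qed

lemma oracle_psi: assumes "M \<ge> 1" "j < M" "j' < M"
  shows "(oracle_op M (grover j) *\<^sub>v psi M) $ (2 * j' + 1) = (if j = j' then complex_of_real (1 / sqrt M) else 0)"
proof -
  have d: "dim_row (oracle_op M f) = 2 * M" "dim_col (oracle_op M f) = 2 * M" for f
    by (auto simp: oracle_op_def)
  have "(oracle_op M (grover j) *\<^sub>v psi M) $ (2 * j' + 1) =
     (\<Sum>k\<in>{0..<2*M}. (if k = sig (grover j) (2 * j' + 1) then 1 else 0) * psi M $ k)"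
  proof -
    have "(oracle_op M (grover j) *\<^sub>v psi M) $ (2 * j' + 1) =
     (\<Sum>k\<in>{0..<2*M}. (if 2 * j' + 1 = sig (grover j) k then 1 else 0) * psi M $ k)"
    proof -
      let ?O = "oracle_op M (grover j)"
      have i: "2 * j' + 1 < 2 * M" using assms by simp
      have dv: "dim_vec (psi M) = 2 * M" by (simp add: psi_def)
      have "(?O *\<^sub>v psi M) $ (2 * j' + 1) = row ?O (2 * j' + 1) \<bullet> psi M"
        using i d by (simp only: index_mult_mat_vec)
      also have "\<dots> = (\<Sum>k\<in>{0..<2*M}. row ?O (2 * j' + 1) $ k * psi M $ k)"
        unfolding scalar_prod_def dv ..
      also have "\<dots> = (\<Sum>k\<in>{0..<2*M}. (if 2 * j' + 1 = sig (grover j) k then 1 else 0) * psi M $ k)"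
      proof (rule sum.cong[OF refl])
        fix k assume "k \<in> {0..<2*M}"
        then have k: "k < 2 * M" by simp
        have "row ?O (2 * j' + 1) $ k = ?O $$ (2 * j' + 1, k)"
          using k i d by (simp only: index_row)
        also have "\<dots> = (if 2 * j' + 1 = sig (grover j) k then 1 else 0)"
          by (rule oracle_entry[OF i k])
        finally show "row ?O (2 * j' + 1) $ k * psi M $ k = (if 2 * j' + 1 = sig (grover j) k then 1 else 0) * psi M $ k"
          by (simp only:)
      qed
      finally show ?thesis .
    qed
    also have "\<dots> = (\<Sum>k\<in>{0..<2*M}. (if k = sig (grover j) (2 * j' + 1) then 1 else 0) * psi M $ k)"
    proof (rule sum.cong[OF refl])
      fix k
      have "(2 * j' + 1 = sig (grover j) k) = (k = sig (grover j) (2 * j' + 1))"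
        by (rule sig_swap[of "grover j" "2*j'+1" k, OF grover_lt])
      then show "(if 2 * j' + 1 = sig (grover j) k then 1 else 0) * psi M $ k = (if k = sig (grover j) (2 * j' + 1) then 1 else 0) * psi M $ k"
        by (simp only:)
    qed
    finally show ?thesis .
  qed
  also have "\<dots> = psi M $ sig (grover j) (2 * j' + 1)"
    using sig_lt[of "2 * j' + 1" M "grover j"] assms
  proof -
    let ?s = "sig (grover j) (2 * j' + 1)"
    have "?s < 2 * M" using sig_lt[of "2 * j' + 1" M "grover j"] assms by simp
    have "(\<Sum>k\<in>{0..<2*M}. (if k = ?s then 1 else 0) * psi M $ k) = (\<Sum>k\<in>{0..<2*M}. if k = ?s then psi M $ k else 0)"
      by (rule sum.cong) auto
    also have "\<dots> = psi M $ ?s" using \<open>?s < 2 * M\<close> by simp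
    finally show ?thesis .
  qed
  also have "\<dots> = (if j = j' then complex_of_real (1 / sqrt M) else 0)"
    using assms by (auto simp: psi_def sig_def grover_def)
  finally show ?thesis .
qed

lemma distinguishable: assumes "M \<ge> 1"
  shows "unamb_distinguishable (2 * M) (map (\<lambda>j. oracle_op M (grover j)) [0..<M])"
  unfolding unamb_distinguishable_def
proof (intro exI conjI)
  show "unit_vector (2 * M * 1) (psi M)" by (rule psi_unit[OF assms])
  show "lin_indep_list (2 * M * 1) (map (\<lambda>W. tensor_id W 1 *\<^sub>v psi M) (map (\<lambda>j. oracle_op M (grover j)) [0..<M]))"
    unfolding lin_indep_list_def
  proof (intro allI impI)
    fix c :: "nat \<Rightarrow> complex" and j0
    assume h: "\<forall>i<2 * M * 1. (\<Sum>j<length (map (\<lambda>W. tensor_id W 1 *\<^sub>v psi M) (map (\<lambda>j. oracle_op M (grover j)) [0..<M])).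
              c j * (map (\<lambda>W. tensor_id W 1 *\<^sub>v psi M) (map (\<lambda>j. oracle_op M (grover j)) [0..<M]) ! j) $ i) = 0"
      and j0: "j0 < length (map (\<lambda>W. tensor_id W 1 *\<^sub>v psi M) (map (\<lambda>j. oracle_op M (grover j)) [0..<M]))"
    have j0M: "j0 < M" using j0 by simp
    have "0 = (\<Sum>j<M. c j * (oracle_op M (grover j) *\<^sub>v psi M) $ (2 * j0 + 1))"
    proof -
      let ?vs = "map (\<lambda>W. tensor_id W 1 *\<^sub>v psi M) (map (\<lambda>j. oracle_op M (grover j)) [0..<M])"
      have len: "length ?vs = M" by simp
      have nth: "?vs ! j = oracle_op M (grover j) *\<^sub>v psi M" if "j < M" for j
        using that by (simp only: nth_map length_map length_upt nth_upt tensor_id_1) simp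
      have lt: "2 * j0 + 1 < 2 * M * 1" using j0M by simp
      have "(\<Sum>j<length ?vs. c j * (?vs ! j) $ (2 * j0 + 1)) = 0" using h lt by blast
      moreover have "(\<Sum>j<length ?vs. c j * (?vs ! j) $ (2 * j0 + 1)) = (\<Sum>j<M. c j * (oracle_op M (grover j) *\<^sub>v psi M) $ (2 * j0 + 1))"
        unfolding len
      proof (rule sum.cong[OF refl])
        fix j assume "j \<in> {..<M}"
        then have "j < M" by simp
        show "c j * (?vs ! j) $ (2 * j0 + 1) = c j * (oracle_op M (grover j) *\<^sub>v psi M) $ (2 * j0 + 1)"
          unfolding nth[OF \<open>j < M\<close>] ..
      qed
      ultimately show ?thesis by metis
    qed
    also have "\<dots> = (\<Sum>j<M. if j = j0 then c j * complex_of_real (1 / sqrt M) else 0)"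
    proof (rule sum.cong[OF refl])
      fix j assume "j \<in> {..<M}"
      then show "c j * (oracle_op M (grover j) *\<^sub>v psi M) $ (2 * j0 + 1) = (if j = j0 then c j * complex_of_real (1 / sqrt M) else 0)"
        unfolding oracle_psi[OF assms _ j0M, of j, OF \<open>j \<in> {..<M}\<close>[unfolded lessThan_iff]]
        by (cases "j = j0") simp_all
    qed
    also have "\<dots> = c j0 * complex_of_real (1 / sqrt M)" using j0M by simp
    finally have z: "c j0 * complex_of_real (1 / sqrt M) = 0" by (rule sym)
    have nz: "complex_of_real (1 / sqrt M) \<noteq> 0" using assms by simp
    show "c j0 = 0" using z nz by (simp only: mult_eq_0_iff) blast
  qed
qed simp



lemma gram_entry: assumes "i < M" "j < M"
  shows "gram_count M $$ (i, j) = (if i = j then int M else int M - 2)"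
proof (cases "i = j")
  case True
  then have "{x. x < M \<and> grover i x = grover j x} = {..<M}" by auto
  then show ?thesis using assms True by (simp add: gram_count_def)
next
  case False
  have "{x. x < M \<and> grover i x = grover j x} = {..<M} - {i, j}"
    using False by (auto simp: grover_def)
  moreover have "card ({..<M} - {i, j}) = M - 2"
    using assms False by (subst card_Diff_subset) auto
  moreover have "M \<ge> 2" using assms False by linarith
  ultimately show ?thesis using assms False by (simp add: gram_count_def of_nat_diff)
qed

definition Emat :: "nat \<Rightarrow> int mat" where
  "Emat M = mat M M (\<lambda>(i,j). if i = j then 1 else if i = 0 then -1 else 0)"
definition Fmat :: "nat \<Rightarrow> int mat" where
  "Fmat M = mat M M (\<lambda>(i,j). if i = j then 1 else if i = 0 then 1 else 0)"

lemma det_Emat: "det (Emat M) = 1"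
proof -
  have "det (Emat M) = prod_list (diag_mat (Emat M))"
    by (rule det_upper_triangular[of _ M]) (auto simp: Emat_def upper_triangular_def)
  also have "\<dots> = 1" unfolding prod_list_diag_prod by (simp add: Emat_def)
  finally show ?thesis .
qed

lemma det_Fmat: "det (Fmat M) = 1"
proof -
  have "det (Fmat M) = prod_list (diag_mat (Fmat M))"
    by (rule det_upper_triangular[of _ M]) (auto simp: Fmat_def upper_triangular_def)
  also have "\<dots> = 1" unfolding prod_list_diag_prod by (simp add: Fmat_def)
  finally show ?thesis .
qed

lemma sum_if0: assumes "M \<ge> 1"
  shows "(\<Sum>k\<in>{0..<M}. if k = 0 then a else b) = a + int (M - 1) * (b :: int)"
proof -
  have "{0..<M} = insert 0 {1..<M}" using assms by auto
  then have "(\<Sum>k\<in>{0..<M}. if k = 0 then a else b) = a + (\<Sum>k\<in>{1..<M}. if k = 0 then a else b)"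
    by simp
  also have "(\<Sum>k\<in>{1..<M}. if k = 0 then a else b) = (\<Sum>k\<in>{1..<M}. b)"
    by (rule sum.cong) auto
  finally show ?thesis by simp
qed

definition Bmat :: "nat \<Rightarrow> int mat" where
  "Bmat M = mat M M (\<lambda>(i,j). if j = 0 then (if i = 0 then int M else int M - 2)
      else (if i = j then 2 else 0) - (if i = 0 then 2 else 0))"

definition Cmat :: "nat \<Rightarrow> int mat" where
  "Cmat M = mat M M (\<lambda>(i,j). if i = 0 then (if j = 0 then int M + int (M - 1) * (int M - 2) else 0)
      else Bmat M $$ (i, j))"

lemma GE: assumes "M \<ge> 1" shows "gram_count M * Emat M = Bmat M"
proof (rule eq_matI)
  fix i j assume ij: "i < dim_row (Bmat M)" "j < dim_col (Bmat M)"
  then have i: "i < M" and j: "j < M" by (auto simp: Bmat_def)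
  have "(gram_count M * Emat M) $$ (i, j) = (\<Sum>k\<in>{0..<M}. gram_count M $$ (i, k) * Emat M $$ (k, j))"
    using i j by (simp add: scalar_prod_def gram_count_def Emat_def)
  also have "\<dots> = (\<Sum>k\<in>{0..<M}. (if k = j then gram_count M $$ (i, k) else 0)
       - (if k = 0 \<and> j \<noteq> 0 then gram_count M $$ (i, k) else 0))"
    by (rule sum.cong) (auto simp: Emat_def j)
  also have "\<dots> = gram_count M $$ (i, j) - (if j \<noteq> 0 then gram_count M $$ (i, 0) else 0)"
    using j by (simp add: sum_subtractf)
  also have "\<dots> = Bmat M $$ (i, j)"
    using i j by (auto simp: Bmat_def gram_entry)
  finally show "(gram_count M * Emat M) $$ (i, j) = Bmat M $$ (i, j)" .
qed (auto simp: Bmat_def gram_count_def Emat_def)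

lemma FB: assumes "M \<ge> 1" shows "Fmat M * Bmat M = Cmat M"
proof (rule eq_matI)
  fix i j assume ij: "i < dim_row (Cmat M)" "j < dim_col (Cmat M)"
  then have i: "i < M" and j: "j < M" by (auto simp: Cmat_def)
  have "(Fmat M * Bmat M) $$ (i, j) = (\<Sum>k\<in>{0..<M}. Fmat M $$ (i, k) * Bmat M $$ (k, j))"
    using i j by (simp add: scalar_prod_def Fmat_def Bmat_def)
  also have "\<dots> = Cmat M $$ (i, j)"
  proof (cases "i = 0")
    case False
    have "(\<Sum>k\<in>{0..<M}. Fmat M $$ (i, k) * Bmat M $$ (k, j)) = (\<Sum>k\<in>{0..<M}. if k = i then Bmat M $$ (k, j) else 0)"
      by (rule sum.cong) (auto simp: Fmat_def i False)
    also have "\<dots> = Bmat M $$ (i, j)" using i by simp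
    finally show ?thesis using False i j by (simp add: Cmat_def)
  next
    case True
    have "(\<Sum>k\<in>{0..<M}. Fmat M $$ (i, k) * Bmat M $$ (k, j)) = (\<Sum>k\<in>{0..<M}. Bmat M $$ (k, j))"
      by (rule sum.cong) (auto simp: Fmat_def i True)
    also have "\<dots> = Cmat M $$ (i, j)"
    proof (cases "j = 0")
      case True
      have "(\<Sum>k\<in>{0..<M}. Bmat M $$ (k, j)) = (\<Sum>k\<in>{0..<M}. if k = 0 then int M else int M - 2)"
        by (rule sum.cong) (auto simp: Bmat_def True j)
      also have "\<dots> = int M + int (M - 1) * (int M - 2)" by (rule sum_if0[OF assms])
      finally show ?thesis using \<open>i = 0\<close> True i by (simp add: Cmat_def)
    next
      case False
      have "(\<Sum>k\<in>{0..<M}. Bmat M $$ (k, j)) = (\<Sum>k\<in>{0..<M}. (if k = j then 2 else 0) - (if k = 0 then 2 else 0))"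
        by (rule sum.cong) (auto simp: Bmat_def False j)
      also have "\<dots> = 0" using j assms by (simp add: sum_subtractf)
      finally show ?thesis using \<open>i = 0\<close> False i j by (simp add: Cmat_def)
    qed
    finally show ?thesis .
  qed
  finally show "(Fmat M * Bmat M) $$ (i, j) = Cmat M $$ (i, j)" .
qed (auto simp: Bmat_def Cmat_def Fmat_def)

lemma det_Cmat: assumes "M \<ge> 1"
  shows "det (Cmat M) = 2 ^ (M - 1) * ((int M - 1)\<^sup>2 + 1)"
proof -
  have "det (Cmat M) = prod_list (diag_mat (Cmat M))"
    by (rule det_lower_triangular[of M]) (auto simp: Cmat_def Bmat_def)
  also have "\<dots> = (\<Prod>i\<in>{0..<M}. Cmat M $$ (i, i))" unfolding prod_list_diag_prod
    by (simp add: Cmat_def)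
  also have "\<dots> = Cmat M $$ (0, 0) * (\<Prod>i\<in>{1..<M}. Cmat M $$ (i, i))"
  proof -
    have "{0..<M} = insert 0 {1..<M}" using assms by auto
    then show ?thesis by simp
  qed
  also have "(\<Prod>i\<in>{1..<M}. Cmat M $$ (i, i)) = (\<Prod>i\<in>{1..<M}. 2)"
    by (rule prod.cong) (auto simp: Cmat_def Bmat_def)
  also have "\<dots> = 2 ^ (M - 1)" by simp
  also have "Cmat M $$ (0, 0) = int M + int (M - 1) * (int M - 2)"
    using assms by (simp add: Cmat_def)
  also have "int M + int (M - 1) * (int M - 2) = (int M - 1)\<^sup>2 + 1"
    using assms by (simp add: of_nat_diff power2_eq_square algebra_simps)
  finally show ?thesis by simp
qed

lemma det_gram: assumes "M \<ge> 1"
  shows "det (gram_count M) = 2 ^ (M - 1) * ((int M - 1)\<^sup>2 + 1)"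
proof -
  have G: "gram_count M \<in> carrier_mat M M" by (simp add: gram_count_def)
  have E: "Emat M \<in> carrier_mat M M" by (simp add: Emat_def)
  have F: "Fmat M \<in> carrier_mat M M" by (simp add: Fmat_def)
  have "det (Cmat M) = det (Fmat M * (gram_count M * Emat M))"
    using GE[OF assms] FB[OF assms] by simp
  also have "\<dots> = det (Fmat M) * (det (gram_count M) * det (Emat M))"
    using G E F by (simp add: det_mult[of _ M])
  also have "\<dots> = det (gram_count M)" by (simp add: det_Emat det_Fmat)
  finally show ?thesis using det_Cmat[OF assms] by simp
qed


theorem mainTheorem6:
  fixes M :: nat
  assumes "M \<ge> 1"
  shows "(\<forall>j<M. unitary_op (2 * M) (oracle_op M (grover j)))
    \<and> unamb_distinguishable (2 * M) (map (\<lambda>j. oracle_op M (grover j)) [0..<M])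
    \<and> det (gram_count M) = 2 ^ (M - 1) * ((int M - 1)\<^sup>2 + 1)
    \<and> det (gram_count M) > 0"
proof (intro conjI allI impI)
  fix j show "unitary_op (2 * M) (oracle_op M (grover j))" by (rule oracle_unitary[OF grover_lt])
next
  show "unamb_distinguishable (2 * M) (map (\<lambda>j. oracle_op M (grover j)) [0..<M])"
    by (rule distinguishable[OF assms])
next
  show "det (gram_count M) = 2 ^ (M - 1) * ((int M - 1)\<^sup>2 + 1)" by (rule det_gram[OF assms])
next
  have "(0::int) < 2 ^ (M - 1) * ((int M - 1)\<^sup>2 + 1)"
    by (intro mult_pos_pos) (simp_all add: add_nonneg_pos)
  then show "det (gram_count M) > 0" using det_gram[OF assms] by simp
qed

end
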